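(* Let $T$ be a diametrical tree with diametral path $D = v_0 v_1 \cdots v_d$ and endpoints $e_1=v_0$, $e_2=v_d$. If a limb of type (A) or of type (B) is located at $v_i$, then $i \geq 2$ and $d-i \geq 2$; if a limb of type (C) is located at $v_i$, then $i \geq 1$ and $d - i \geq 1$.
   Context: Let $G=(V,E)$ be a finite connected graph with distance $d(u,v)$, eccentricity $e(v)=\max_w d(v,w)$ and diameter $\mathrm{diam}(G)=\max_v e(v)$. A broadcast is a function $f: V\to\{0,\dots,\mathrm{diam}(G)\}$ with $f(v)\le e(v)$; its cost is $\sum_v f(v)$; it is dominating if every $u$ has some $v$ with $f(v)\ge 1$ and $d(u,v)\le f(v)$; a dominating broadcast is minimal if decreasing $f(v)$ for any $v$ with $f(v)>0$ destroys domination. $\Gamma_b(G)$ is the maximum cost of a minimal dominating broadcast, and $G$ is called diametrical if $\Gamma_b(G)=\mathrm{diam}(G)$. For a tree $T$ with a fixed diametral path $D=v_0\cdots v_d$, a vertex $u\notin D$ protrudes from $v_i$ if $v_i$ is the vertex of $D$ closest to $u$; the limb at $v_i$ (when nonempty) is the subtree induced by $v_i$ and the vertices protruding from $v_i$. It is of type (A) if it is a path $v_i x y$ of length 2 (exactly two protruding vertices); of type (B) if it consists of exactly two leaves adjacent to $v_i$; of type (C) if it consists of exactly one leaf adjacent to $v_i$. *)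

theory Defs
  imports Main
begin

definition simple_graph :: "'a set \<Rightarrow> ('a \<Rightarrow> 'a \<Rightarrow> bool) \<Rightarrow> bool" where
  "simple_graph V E \<longleftrightarrow> finite V \<and> V \<noteq> {} \<and>
     (\<forall>u v. E u v \<longrightarrow> u \<in> V \<and> v \<in> V) \<and>
     (\<forall>u v. E u v \<longrightarrow> E v u) \<and> (\<forall>u. \<not> E u u)"

definition walk :: "'a set \<Rightarrow> ('a \<Rightarrow> 'a \<Rightarrow> bool) \<Rightarrow> 'a list \<Rightarrow> bool" where
  "walk V E xs \<longleftrightarrow> xs \<noteq> [] \<and> set xs \<subseteq> V \<and>
     (\<forall>k. Suc k < length xs \<longrightarrow> E (xs ! k) (xs ! Suc k))"

definition connected_graph :: "'a set \<Rightarrow> ('a \<Rightarrow> 'a \<Rightarrow> bool) \<Rightarrow> bool" where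
  "connected_graph V E \<longleftrightarrow>
     (\<forall>u\<in>V. \<forall>v\<in>V. \<exists>xs. walk V E xs \<and> hd xs = u \<and> last xs = v)"

definition acyclic_graph :: "'a set \<Rightarrow> ('a \<Rightarrow> 'a \<Rightarrow> bool) \<Rightarrow> bool" where
  "acyclic_graph V E \<longleftrightarrow>
     \<not> (\<exists>xs. walk V E xs \<and> distinct xs \<and> 3 \<le> length xs \<and> E (last xs) (hd xs))"

definition is_tree :: "'a set \<Rightarrow> ('a \<Rightarrow> 'a \<Rightarrow> bool) \<Rightarrow> bool" where
  "is_tree V E \<longleftrightarrow> simple_graph V E \<and> connected_graph V E \<and> acyclic_graph V E"

definition gdist :: "'a set \<Rightarrow> ('a \<Rightarrow> 'a \<Rightarrow> bool) \<Rightarrow> 'a \<Rightarrow> 'a \<Rightarrow> nat" where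
  "gdist V E u v = (LEAST n. \<exists>xs. walk V E xs \<and> hd xs = u \<and> last xs = v \<and> length xs = Suc n)"

definition ecc :: "'a set \<Rightarrow> ('a \<Rightarrow> 'a \<Rightarrow> bool) \<Rightarrow> 'a \<Rightarrow> nat" where
  "ecc V E v = Max ((\<lambda>w. gdist V E v w) ` V)"

definition diam :: "'a set \<Rightarrow> ('a \<Rightarrow> 'a \<Rightarrow> bool) \<Rightarrow> nat" where
  "diam V E = Max ((\<lambda>v. ecc V E v) ` V)"

text \<open>Broadcasts (only values on V matter).\<close>
definition broadcast :: "'a set \<Rightarrow> ('a \<Rightarrow> 'a \<Rightarrow> bool) \<Rightarrow> ('a \<Rightarrow> nat) \<Rightarrow> bool" where
  "broadcast V E f \<longleftrightarrow> (\<forall>v\<in>V. f v \<le> ecc V E v)"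

definition bcost :: "'a set \<Rightarrow> ('a \<Rightarrow> nat) \<Rightarrow> nat" where
  "bcost V f = (\<Sum>v\<in>V. f v)"

definition dominating_broadcast :: "'a set \<Rightarrow> ('a \<Rightarrow> 'a \<Rightarrow> bool) \<Rightarrow> ('a \<Rightarrow> nat) \<Rightarrow> bool" where
  "dominating_broadcast V E f \<longleftrightarrow> broadcast V E f \<and>
     (\<forall>u\<in>V. \<exists>v\<in>V. 1 \<le> f v \<and> gdist V E u v \<le> f v)"

definition minimal_dominating_broadcast :: "'a set \<Rightarrow> ('a \<Rightarrow> 'a \<Rightarrow> bool) \<Rightarrow> ('a \<Rightarrow> nat) \<Rightarrow> bool" where
  "minimal_dominating_broadcast V E f \<longleftrightarrow> dominating_broadcast V E f \<and>
     (\<forall>v\<in>V. 0 < f v \<longrightarrow> (\<forall>k < f v. \<not> dominating_broadcast V E (f(v := k))))"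

definition upper_broadcast_number :: "'a set \<Rightarrow> ('a \<Rightarrow> 'a \<Rightarrow> bool) \<Rightarrow> nat" where
  "upper_broadcast_number V E =
     Max {bcost V f | f. minimal_dominating_broadcast V E f}"

definition diametrical :: "'a set \<Rightarrow> ('a \<Rightarrow> 'a \<Rightarrow> bool) \<Rightarrow> bool" where
  "diametrical V E \<longleftrightarrow> upper_broadcast_number V E = diam V E"

text \<open>Diametral path D = v_0 ... v_d given as a list of length d+1.\<close>
definition diametral_path :: "'a set \<Rightarrow> ('a \<Rightarrow> 'a \<Rightarrow> bool) \<Rightarrow> 'a list \<Rightarrow> bool" where
  "diametral_path V E D \<longleftrightarrow> walk V E D \<and> distinct D \<and> length D = Suc (diam V E) \<and>
     gdist V E (hd D) (last D) = diam V E"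

definition protrudes :: "'a set \<Rightarrow> ('a \<Rightarrow> 'a \<Rightarrow> bool) \<Rightarrow> 'a list \<Rightarrow> 'a \<Rightarrow> nat \<Rightarrow> bool" where
  "protrudes V E D u i \<longleftrightarrow> u \<in> V \<and> u \<notin> set D \<and> i < length D \<and>
     (\<forall>j < length D. j \<noteq> i \<longrightarrow> gdist V E u (D ! i) < gdist V E u (D ! j))"

definition protruding :: "'a set \<Rightarrow> ('a \<Rightarrow> 'a \<Rightarrow> bool) \<Rightarrow> 'a list \<Rightarrow> nat \<Rightarrow> 'a set" where
  "protruding V E D i = {u. protrudes V E D u i}"

definition is_leaf :: "'a set \<Rightarrow> ('a \<Rightarrow> 'a \<Rightarrow> bool) \<Rightarrow> 'a \<Rightarrow> bool" where
  "is_leaf V E x \<longleftrightarrow> x \<in> V \<and> card {w\<in>V. E x w} = 1"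

definition limb_type_A :: "'a set \<Rightarrow> ('a \<Rightarrow> 'a \<Rightarrow> bool) \<Rightarrow> 'a list \<Rightarrow> nat \<Rightarrow> bool" where
  "limb_type_A V E D i \<longleftrightarrow> (\<exists>x y. x \<noteq> y \<and> protruding V E D i = {x, y} \<and>
     E (D ! i) x \<and> E x y \<and> \<not> E (D ! i) y)"

definition limb_type_B :: "'a set \<Rightarrow> ('a \<Rightarrow> 'a \<Rightarrow> bool) \<Rightarrow> 'a list \<Rightarrow> nat \<Rightarrow> bool" where
  "limb_type_B V E D i \<longleftrightarrow> (\<exists>x y. x \<noteq> y \<and> protruding V E D i = {x, y} \<and>
     E (D ! i) x \<and> E (D ! i) y \<and> is_leaf V E x \<and> is_leaf V E y)"

definition limb_type_C :: "'a set \<Rightarrow> ('a \<Rightarrow> 'a \<Rightarrow> bool) \<Rightarrow> 'a list \<Rightarrow> nat \<Rightarrow> bool" where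
  "limb_type_C V E D i \<longleftrightarrow> (\<exists>x. protruding V E D i = {x} \<and>
     E (D ! i) x \<and> is_leaf V E x)"

end

theory Submission imports Defs begin

lemma walk_succ: "walk V E xs \<longleftrightarrow> xs \<noteq> [] \<and> set xs \<subseteq> V \<and> successively E xs"
  unfolding walk_def successively_conv_nth by blast

locale tr =
  fixes V :: "'a set" and E :: "'a \<Rightarrow> 'a \<Rightarrow> bool"
  assumes tree: "is_tree V E"
begin

lemma finV: "finite V" and EV: "E u v \<Longrightarrow> u \<in> V \<and> v \<in> V" and Esym: "E u v \<Longrightarrow> E v u"
  and Eirr: "\<not> E u u"
  using tree unfolding is_tree_def simple_graph_def by auto

lemma conn: "u \<in> V \<Longrightarrow> v \<in> V \<Longrightarrow> \<exists>xs. walk V E xs \<and> hd xs = u \<and> last xs = v"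
  using tree unfolding is_tree_def connected_graph_def by auto

lemma acyc: "\<not> (walk V E xs \<and> distinct xs \<and> 3 \<le> length xs \<and> E (last xs) (hd xs))"
  using tree unfolding is_tree_def acyclic_graph_def by blast

lemma gdist_ex: assumes "u \<in> V" "v \<in> V"
  shows "\<exists>xs. walk V E xs \<and> hd xs = u \<and> last xs = v \<and> length xs = Suc (gdist V E u v)"
proof -
  obtain xs where xs: "walk V E xs" "hd xs = u" "last xs = v" using conn assms by blast
  then have "\<exists>n xs. walk V E xs \<and> hd xs = u \<and> last xs = v \<and> length xs = Suc n"
    by (metis walk_def length_0_conv not0_implies_Suc)
  then show ?thesis unfolding gdist_def by (rule LeastI_ex)
qed

lemma gdist_le: assumes "walk V E xs" "hd xs = u" "last xs = v"
  shows "gdist V E u v \<le> length xs - 1"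
proof -
  have "length xs = Suc (length xs - 1)" using assms(1) by (cases xs) (auto simp: walk_def)
  then show ?thesis unfolding gdist_def using assms by (intro Least_le) blast
qed

lemma shortest_distinct: assumes "walk V E xs" "length xs = Suc (gdist V E (hd xs) (last xs))"
  shows "distinct xs"
proof (rule ccontr)
  assume "\<not> distinct xs"
  then obtain A B C y where xs: "xs = A @ [y] @ B @ [y] @ C" using not_distinct_decomp by blast
  let ?ys = "A @ y # C"
  have "walk V E ?ys" using assms(1) unfolding walk_succ xs
    by (auto simp: successively_append_iff successively_Cons)
  moreover have "hd ?ys = hd xs" "last ?ys = last xs" unfolding xs by (cases A; cases C; simp)+
  ultimately have "gdist V E (hd xs) (last xs) \<le> length ?ys - 1" using gdist_le by metis
  then show False using assms(2) unfolding xs by simp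
qed

lemma divergence: assumes P: "walk V E (a#b#P')" "distinct (a#b#P')"
  and Q: "walk V E (a#c#Q')" "distinct (a#c#Q')" and bc: "b \<noteq> c"
  and l: "last (b#P') = last (c#Q')"
  shows False
proof -
  have "\<exists>x\<in>set (c#Q'). x \<in> set (a#b#P')" using l by (metis last_in_set list.set_intros(2) list.distinct(1))
  then obtain Q1 t Q2 where Qs: "c#Q' = Q1 @ t # Q2" and tP: "t \<in> set (a#b#P')"
    and Q1P: "\<forall>y\<in>set Q1. y \<notin> set (a#b#P')"
    using split_list_first_prop[of "c#Q'" "\<lambda>x. x \<in> set (a#b#P')"] by blast
  obtain P1 P2 where Ps: "a#b#P' = P1 @ t # P2" using tP split_list by metis
  have ta: "t \<noteq> a" using Q(2) Qs by (metis distinct.simps(2) in_set_conv_decomp list.set_intros(1))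
  then obtain P1' where P1: "P1 = a # P1'" using Ps by (cases P1) auto
  let ?C = "P1 @ t # rev Q1"
  have sP: "successively E (a#b#P')" and sQ: "successively E (a#c#Q')" using P Q by (auto simp: walk_succ)
  have wP1: "successively E (P1 @ [t])" using sP unfolding Ps
    by (metis append_Cons append_assoc self_append_conv2 successively_append_iff)
  have sQ1: "successively E (Q1 @ [t])" using sQ unfolding Qs
    by (metis (no_types, lifting) append_Cons append_assoc self_append_conv2 successively_Cons successively_append_iff)
  have sQ1r: "successively E (t # rev Q1)"
  proof -
    have "successively (\<lambda>x y. E y x) (Q1 @ [t])" using sQ1 by (rule successively_mono) (simp add: Esym)
    then have "successively E (rev (Q1 @ [t]))" by (simp only: successively_rev)
    then show ?thesis by simp
  qed
  have walkC: "walk V E ?C"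
    unfolding walk_succ
  proof (intro conjI)
    show "successively E ?C" using wP1 sQ1r
      by (auto simp: successively_append_iff successively_Cons)
    show "set ?C \<subseteq> V" using P Q Ps Qs unfolding walk_def
      by (auto; metis Un_iff set_append subset_iff list.set_intros)
  qed simp
  have distC: "distinct ?C" using P(2) Q(2) Ps Qs Q1P
    by (auto; metis distinct_append distinct.simps(2) set_append Un_iff list.set_intros)
  show False
  proof (cases Q1)
    case Nil
    then have tc: "t = c" using Qs by simp
    then have "P1' \<noteq> []" using Ps P1 bc by auto
    moreover have "E t a" using tc sQ by (auto intro: Esym)
    ultimately show False using acyc[of ?C] walkC distC Nil P1 by (cases P1') auto
  next
    case (Cons q Q1')
    then have "q = c" using Qs by simp
    then have "E (last ?C) (hd ?C)" using sQ Cons P1 by (auto intro: Esym)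
    then show False using acyc[of ?C] walkC distC Cons P1 by auto
  qed
qed

end
context tr begin

lemma paths_unique: "walk V E P \<Longrightarrow> distinct P \<Longrightarrow> walk V E Q \<Longrightarrow> distinct Q \<Longrightarrow>
  hd P = hd Q \<Longrightarrow> last P = last Q \<Longrightarrow> P = Q"
proof (induction P arbitrary: Q)
  case Nil then show ?case by (simp add: walk_def)
next
  case (Cons a P)
  obtain Q0 where Q: "Q = a # Q0" using Cons.prems by (cases Q) (auto simp: walk_def)
  show ?case
  proof (cases P)
    case Nil
    show ?thesis
    proof (cases Q0)
      case (Cons q Q1)
      then have "last Q0 \<in> set Q0" by simp
      moreover have "last Q0 = a" using Cons.prems Q Nil \<open>Q0 = q # Q1\<close> by auto
      ultimately show ?thesis using Cons.prems Q by auto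
    qed (use Q Nil in auto)
  next
    case (Cons b P')
    have "Q0 \<noteq> []" using Cons.prems Q \<open>P = b # P'\<close> last_in_set[of "b#P'"] by auto
    then obtain c Q' where Q0: "Q0 = c # Q'" by (cases Q0) auto
    show ?thesis
    proof (cases "b = c")
      case True
      have "P = Q0"
        apply (rule Cons.IH)
        using Cons.prems Q Q0 True \<open>P = b # P'\<close> by (auto simp: walk_succ)
      then show ?thesis using Q by simp
    next
      case False
      then show ?thesis using divergence[of a b P' c Q'] Cons.prems Q Q0 \<open>P = b # P'\<close> by auto
    qed
  qed
qed

lemma gdist_path: assumes "walk V E P" "distinct P"
  shows "gdist V E (hd P) (last P) = length P - 1"
proof -
  have hl: "hd P \<in> V" "last P \<in> V" using assms by (auto simp: walk_def)
  obtain xs where xs: "walk V E xs" "hd xs = hd P" "last xs = last P"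
    "length xs = Suc (gdist V E (hd P) (last P))" using gdist_ex[OF hl] by blast
  then have "distinct xs" using shortest_distinct by metis
  then have "xs = P" using paths_unique xs assms by metis
  then show ?thesis using xs by simp
qed

lemma gdist_sym_le: assumes "u \<in> V" "v \<in> V" shows "gdist V E v u \<le> gdist V E u v"
proof -
  obtain xs where xs: "walk V E xs" "hd xs = u" "last xs = v"
    "length xs = Suc (gdist V E u v)" using gdist_ex[OF assms] by blast
  have "walk V E (rev xs)" using xs(1) unfolding walk_succ
    by (auto elim: successively_mono intro: Esym)
  moreover have "hd (rev xs) = v" "last (rev xs) = u" using xs by (auto simp: hd_rev last_rev)
  ultimately show ?thesis using gdist_le xs(4) by fastforce
qed

lemma gdist_sym: "u \<in> V \<Longrightarrow> v \<in> V \<Longrightarrow> gdist V E u v = gdist V E v u"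
  using gdist_sym_le by (meson le_antisym)

lemma gdist_refl: "u \<in> V \<Longrightarrow> gdist V E u u = 0"
  using gdist_le[of "[u]" u u] by (simp add: walk_def)

lemma gdist_0: assumes "u \<in> V" "v \<in> V" "gdist V E u v = 0" shows "u = v"
  using gdist_ex[OF assms(1,2)] assms(3) by (auto simp: length_Suc_conv)

lemma gdist_1: assumes "u \<in> V" "v \<in> V" "gdist V E u v = 1" shows "E u v"
proof -
  obtain xs where xs: "walk V E xs" "hd xs = u" "last xs = v"
    "length xs = 2" using gdist_ex[OF assms(1,2)] assms(3) by auto
  then obtain a b where "xs = [a,b]" by (auto simp: numeral_2_eq_2 length_Suc_conv)
  then show ?thesis using xs by (auto simp: walk_succ)
qed

lemma gdist_tri: assumes "u \<in> V" "v \<in> V" "w \<in> V"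
  shows "gdist V E u w \<le> gdist V E u v + gdist V E v w"
proof -
  obtain xs where xs: "walk V E xs" "hd xs = u" "last xs = v"
    "length xs = Suc (gdist V E u v)" using gdist_ex assms by blast
  obtain ys where ys: "walk V E ys" "hd ys = v" "last ys = w"
    "length ys = Suc (gdist V E v w)" using gdist_ex assms by blast
  obtain y ys' where ys': "ys = y # ys'" using ys by (cases ys) auto
  have "walk V E (xs @ ys')" using xs ys ys' unfolding walk_succ
    by (auto simp: successively_append_iff successively_Cons)
  moreover have "hd (xs @ ys') = u" "last (xs @ ys') = w" using xs ys ys' by (auto simp: walk_def)
  ultimately have "gdist V E u w \<le> length (xs @ ys') - 1" using gdist_le by blast
  then show ?thesis using xs ys ys' by simp
qed

lemma gdist_le_ecc: assumes "u \<in> V" "v \<in> V" shows "gdist V E u v \<le> ecc V E u"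
  unfolding ecc_def using assms finV by (intro Max_ge) auto

lemma ecc_le_diam: assumes "u \<in> V" shows "ecc V E u \<le> diam V E"
  unfolding diam_def using assms finV by (intro Max_ge) auto

lemma gdist_le_diam: "u \<in> V \<Longrightarrow> v \<in> V \<Longrightarrow> gdist V E u v \<le> diam V E"
  using gdist_le_ecc ecc_le_diam le_trans by blast

lemma gdist_mid: assumes "u \<in> V" "v \<in> V" "k \<le> gdist V E u v"
  shows "\<exists>z\<in>V. gdist V E u z = k"
proof -
  obtain xs where xs: "walk V E xs" "hd xs = u" "last xs = v"
    "length xs = Suc (gdist V E u v)" using gdist_ex assms by blast
  let ?z = "xs ! k"
  have zV: "?z \<in> V" using xs assms(3) by (auto simp: walk_def)
  have w1: "walk V E (take (Suc k) xs)" using xs(1) assms(3) xs(4) unfolding walk_def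
    by (auto dest: in_set_takeD)
  have "hd (take (Suc k) xs) = u" using xs by (cases xs) auto
  moreover have "last (take (Suc k) xs) = ?z" using xs assms(3) by (simp add: take_Suc_conv_app_nth)
  ultimately have "gdist V E u ?z \<le> k" using gdist_le[OF w1] xs assms(3) by simp
  moreover have w2: "walk V E (drop k xs)" using xs(1) assms(3) xs(4) unfolding walk_def
    by (auto dest: in_set_dropD)
  have "gdist V E ?z v \<le> gdist V E u v - k" using gdist_le[OF w2] xs assms(3)
    by (simp add: hd_drop_conv_nth)
  moreover have "gdist V E u v \<le> gdist V E u ?z + gdist V E ?z v" using gdist_tri assms zV by blast
  ultimately show ?thesis using zV assms(3) by (intro bexI[of _ ?z]) auto
qed

end
context tr begin

lemma bcost_le_upper: assumes "minimal_dominating_broadcast V E f"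
  shows "bcost V f \<le> upper_broadcast_number V E"
proof -
  let ?C = "{bcost V f |f. minimal_dominating_broadcast V E f}"
  have "?C \<subseteq> {..(\<Sum>v\<in>V. ecc V E v)}"
    by (auto simp: minimal_dominating_broadcast_def dominating_broadcast_def broadcast_def
        bcost_def intro!: sum_mono)
  then have "finite ?C" using finite_subset by blast
  then show ?thesis unfolding upper_broadcast_number_def using assms by (intro Max_ge) auto
qed

lemma core:
  fixes k :: nat
  assumes wV: "w \<in> V" and SV: "S \<subseteq> V" and wS: "w \<notin> S" and k1: "1 \<le> k"
    and kecc: "k \<le> ecc V E w" and secc: "\<forall>s\<in>S. 1 \<le> ecc V E s"
    and dom: "\<forall>u\<in>V. gdist V E u w \<le> k \<or> (\<exists>s\<in>S. gdist V E u s \<le> 1)"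
    and priv1: "\<forall>s\<in>S. k < gdist V E s w"
    and priv2: "\<forall>s\<in>S. \<forall>s'\<in>S. s' \<noteq> s \<longrightarrow> 1 < gdist V E s s'"
    and wfar: "\<forall>s\<in>S. 1 < gdist V E w s"
    and wit: "\<forall>k'. 1 \<le> k' \<longrightarrow> k' < k \<longrightarrow> (\<exists>z\<in>V. k' < gdist V E z w \<and> (\<forall>s\<in>S. 1 < gdist V E z s))"
  shows "upper_broadcast_number V E \<ge> k + card S"
proof -
  define f where "f = (\<lambda>v. if v = w then k else if v \<in> S then (1::nat) else 0)"
  have bc: "broadcast V E f" unfolding broadcast_def f_def using kecc secc by auto
  have domf: "dominating_broadcast V E f" unfolding dominating_broadcast_def
  proof (intro conjI bc ballI)
    fix u assume "u \<in> V"
    then consider "gdist V E u w \<le> k" | s where "s \<in> S" "gdist V E u s \<le> 1" using dom by blast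
    then show "\<exists>v\<in>V. 1 \<le> f v \<and> gdist V E u v \<le> f v"
    proof cases
      case 1 then show ?thesis using wV k1 by (intro bexI[of _ w]) (auto simp: f_def)
    next
      case 2 then show ?thesis using SV wS by (intro bexI[of _ s]) (auto simp: f_def)
    qed
  qed
  have minf: "minimal_dominating_broadcast V E f"
    unfolding minimal_dominating_broadcast_def
  proof (intro conjI domf ballI impI allI)
    fix v k' assume vV: "v \<in> V" and fv: "0 < f v" and k': "k' < f v"
    show "\<not> dominating_broadcast V E (f(v := k'))"
    proof (cases "v = w")
      case True
      then have k'k: "k' < k" using k' by (simp add: f_def)
      show ?thesis
      proof (cases "k' = 0")
        case True
        have "\<not> (\<exists>x\<in>V. 1 \<le> (f(v := k')) x \<and> gdist V E w x \<le> (f(v := k')) x)"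
          using \<open>v = w\<close> True wfar by (auto simp: f_def)
        then show ?thesis using wV unfolding dominating_broadcast_def by blast
      next
        case False
        then obtain z where z: "z \<in> V" "k' < gdist V E z w" "\<forall>s\<in>S. 1 < gdist V E z s"
          using wit[rule_format, of k'] k'k by (metis less_one linorder_not_le)
        have "\<not> (\<exists>x\<in>V. 1 \<le> (f(v := k')) x \<and> gdist V E z x \<le> (f(v := k')) x)"
          using \<open>v = w\<close> z by (auto simp: f_def)
        then show ?thesis using z(1) unfolding dominating_broadcast_def by blast
      qed
    next
      case False
      then have vS: "v \<in> S" and k0: "k' = 0" using fv k' by (auto simp: f_def split: if_splits)
      have "\<not> (\<exists>x\<in>V. 1 \<le> (f(v := k')) x \<and> gdist V E v x \<le> (f(v := k')) x)"
        using vS k0 priv1 priv2 False by (auto simp: f_def) (metis Suc_le_eq not_le)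
      then show ?thesis using vV unfolding dominating_broadcast_def by blast
    qed
  qed
  have "f = (\<lambda>v. (if v = w then k else 0) + (if v \<in> S then 1 else 0))"
    using wS by (auto simp: f_def)
  then have "bcost V f = k + card S" unfolding bcost_def
    using wV SV finV by (simp add: sum.distrib sum.If_cases Int_absorb1 Int_absorb2)
  then show ?thesis using bcost_le_upper[OF minf] by simp
qed

end
context tr begin

lemma adj_neq: assumes wV: "w \<in> V" and E: "E a b"
  shows "gdist V E w a \<noteq> gdist V E w b"
proof
  assume eq: "gdist V E w a = gdist V E w b"
  have aV: "a \<in> V" and bV: "b \<in> V" using EV E by auto
  obtain P where P: "walk V E P" "hd P = w" "last P = a" "length P = Suc (gdist V E w a)"
    using gdist_ex[OF wV aV] by blast
  have dP: "distinct P" using shortest_distinct P by metis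
  have bP: "b \<notin> set P"
  proof
    assume "b \<in> set P"
    then obtain P1 P2 where Ps: "P = P1 @ b # P2" by (metis split_list)
    have "walk V E (P1 @ [b])" using P(1) unfolding Ps walk_succ
      by (auto simp: successively_append_iff successively_Cons)
    moreover have "hd (P1 @ [b]) = w" using P(2) Ps by (cases P1) auto
    ultimately have "gdist V E w b \<le> length P1" using gdist_le by fastforce
    moreover have "P2 \<noteq> []" using Ps P(3) E Eirr by auto
    ultimately show False using eq P(4) Ps by (cases P2) auto
  qed
  have "walk V E (P @ [b])" using P E bV unfolding walk_succ
    by (auto simp: successively_append_iff successively_Cons)
  moreover have "distinct (P @ [b])" using dP bP by simp
  ultimately have "gdist V E (hd (P @ [b])) (last (P @ [b])) = length P"
    using gdist_path by fastforce
  then show False using eq P by (cases P) auto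
qed

lemma BL: assumes wV: "w \<in> V" and d2: "2 \<le> diam V E"
  and S3: "3 \<le> card {u\<in>V. gdist V E w u = diam V E}"
  shows "diam V E < upper_broadcast_number V E"
proof -
  define d where "d = diam V E"
  define S where "S = {u\<in>V. gdist V E w u = d}"
  have SV: "S \<subseteq> V" and finS: "finite S" using finV by (auto simp: S_def)
  have S3': "3 \<le> card S" using S3 by (simp add: S_def d_def)
  have wS: "w \<notin> S" using gdist_refl[OF wV] d2 by (auto simp: S_def d_def)
  obtain s0 where s0: "s0 \<in> S" using S3' by (metis card.empty not_numeral_le_zero ex_in_conv)
  have sw: "\<forall>s\<in>S. gdist V E s w = d" using gdist_sym wV by (auto simp: S_def)
  have dle: "\<forall>u\<in>V. gdist V E w u \<le> d" using gdist_le_diam wV by (simp add: d_def)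
  have eccw: "d \<le> ecc V E w" using gdist_le_ecc[OF wV, of s0] s0 by (auto simp: S_def)
  have secc: "\<forall>s\<in>S. 1 \<le> ecc V E s" using gdist_le_ecc[OF _ wV] sw SV d2 d_def
    by (metis le_trans one_le_numeral subsetD)
  have wfar: "\<forall>s\<in>S. 1 < gdist V E w s" using d2 by (auto simp: S_def d_def)
  have priv2: "\<forall>s\<in>S. \<forall>s'\<in>S. s' \<noteq> s \<longrightarrow> 1 < gdist V E s s'"
  proof (intro ballI impI)
    fix s s' assume ss: "s \<in> S" "s' \<in> S" "s' \<noteq> s"
    have V2: "s \<in> V" "s' \<in> V" using ss SV by auto
    have "gdist V E s s' \<noteq> 0" using gdist_0[OF V2] ss by auto
    moreover have "gdist V E s s' \<noteq> 1"
    proof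
      assume "gdist V E s s' = 1"
      then have "E s s'" using gdist_1[OF V2] by simp
      then show False using adj_neq[OF wV, of s s'] ss by (auto simp: S_def)
    qed
    ultimately show "1 < gdist V E s s'" by linarith
  qed
  have key: "\<exists>k. k + 3 > d \<and> upper_broadcast_number V E \<ge> k + card S"
  proof (cases "\<exists>z\<in>V. gdist V E w z = d - 1 \<and> (\<forall>s\<in>S. 1 < gdist V E z s)")
    case True
    then obtain z where z: "z \<in> V" "gdist V E w z = d - 1" "\<forall>s\<in>S. 1 < gdist V E z s" by blast
    have "upper_broadcast_number V E \<ge> (d - 1) + card S"
    proof (rule core[OF wV SV wS _ _ secc])
      show "1 \<le> d - 1" "d - 1 \<le> ecc V E w" using d2 eccw d_def by auto
      show "\<forall>u\<in>V. gdist V E u w \<le> d - 1 \<or> (\<exists>s\<in>S. gdist V E u s \<le> 1)"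
      proof
        fix u assume uV: "u \<in> V"
        show "gdist V E u w \<le> d - 1 \<or> (\<exists>s\<in>S. gdist V E u s \<le> 1)"
        proof (cases "gdist V E w u = d")
          case True then show ?thesis using uV gdist_refl[OF uV] by (auto simp: S_def)
        next
          case False then show ?thesis using dle uV gdist_sym[OF uV wV] by force
        qed
      qed
      show "\<forall>s\<in>S. d - 1 < gdist V E s w" using sw d2 d_def by auto
      show "\<forall>k'. 1 \<le> k' \<longrightarrow> k' < d - 1 \<longrightarrow> (\<exists>z\<in>V. k' < gdist V E z w \<and> (\<forall>s\<in>S. 1 < gdist V E z s))"
        using z gdist_sym[OF z(1) wV] by (auto intro!: bexI[of _ z])
    qed (use priv2 wfar sw in auto)
    then show ?thesis using d2 by (intro exI[of _ "d - 1"]) (auto simp: d_def)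
  next
    case False
    then have near: "\<forall>u\<in>V. gdist V E w u = d - 1 \<longrightarrow> (\<exists>s\<in>S. gdist V E u s \<le> 1)"
      by (auto simp: not_less)
    define k where "k = (if d = 2 then 1 else d - 2)"
    have "upper_broadcast_number V E \<ge> k + card S"
    proof (rule core[OF wV SV wS _ _ secc])
      show "1 \<le> k" "k \<le> ecc V E w" using d2 eccw d_def by (auto simp: k_def)
      show "\<forall>u\<in>V. gdist V E u w \<le> k \<or> (\<exists>s\<in>S. gdist V E u s \<le> 1)"
      proof
        fix u assume uV: "u \<in> V"
        show "gdist V E u w \<le> k \<or> (\<exists>s\<in>S. gdist V E u s \<le> 1)"
        proof (cases "gdist V E w u = d")
          case True then show ?thesis using uV gdist_refl[OF uV] by (auto simp: S_def)
        next
          case False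
          show ?thesis
          proof (cases "gdist V E w u = d - 1")
            case True then show ?thesis using near uV by blast
          next
            case False2: False
            have "gdist V E w u \<le> d" using dle uV by blast
            then have "gdist V E w u \<le> k" using False False2 d2 d_def by (auto simp: k_def)
            then show ?thesis using gdist_sym[OF uV wV] by simp
          qed
        qed
      qed
      show "\<forall>s\<in>S. k < gdist V E s w" using sw d2 d_def by (auto simp: k_def)
      show "\<forall>k'. 1 \<le> k' \<longrightarrow> k' < k \<longrightarrow> (\<exists>z\<in>V. k' < gdist V E z w \<and> (\<forall>s\<in>S. 1 < gdist V E z s))"
      proof (intro allI impI)
        fix k' assume k': "1 \<le> k'" "k' < k"
        then have d3: "d \<ge> 3" and kk: "k = d - 2" by (auto simp: k_def split: if_splits)
        have s0V: "s0 \<in> V" and ds0: "gdist V E w s0 = d" using s0 SV by (auto simp: S_def)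
        obtain z where z: "z \<in> V" "gdist V E w z = d - 2" using gdist_mid[OF wV s0V, of "d - 2"] ds0 by auto
        have "\<forall>s\<in>S. 1 < gdist V E z s"
        proof
          fix s assume "s \<in> S"
          then have "d \<le> gdist V E w z + gdist V E z s" using gdist_tri[OF wV z(1)] SV
            by (auto simp: S_def)
          then show "1 < gdist V E z s" using z d3 by auto
        qed
        then show "\<exists>z\<in>V. k' < gdist V E z w \<and> (\<forall>s\<in>S. 1 < gdist V E z s)"
          using z gdist_sym[OF z(1) wV] k' kk by (intro bexI[of _ z]) auto
      qed
    qed (use priv2 wfar sw in auto)
    then show ?thesis using d2 by (intro exI[of _ k]) (auto simp: k_def d_def)
  qed
  then show ?thesis using S3' by (auto simp: d_def)
qed

end
context tr begin

lemma dpath_rev: assumes "diametral_path V E D" shows "diametral_path V E (rev D)"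
proof -
  have w: "walk V E D" and dD: "distinct D" and l: "length D = Suc (diam V E)"
    and g: "gdist V E (hd D) (last D) = diam V E" using assms by (auto simp: diametral_path_def)
  have "walk V E (rev D)" using w unfolding walk_succ by (auto elim: successively_mono intro: Esym)
  moreover have "hd D \<in> V" "last D \<in> V" using w by (auto simp: walk_def)
  ultimately show ?thesis using dD l g gdist_sym unfolding diametral_path_def
    by (auto simp: hd_rev last_rev)
qed

lemma protrudes_rev: assumes l: "length D = Suc d" and i: "i \<le> d"
  shows "protrudes V E (rev D) u (d - i) \<longleftrightarrow> protrudes V E D u i"
proof -
  have r: "\<And>j. j \<le> d \<Longrightarrow> rev D ! j = D ! (d - j)" using l by (simp add: rev_nth)
  have ri: "rev D ! (d - i) = D ! i" using r i by simp
  have "(\<forall>j<length (rev D). j \<noteq> d - i \<longrightarrow> gdist V E u (rev D ! (d - i)) < gdist V E u (rev D ! j))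
     \<longleftrightarrow> (\<forall>j<length D. j \<noteq> i \<longrightarrow> gdist V E u (D ! i) < gdist V E u (D ! j))"
  proof
    assume H: "\<forall>j<length (rev D). j \<noteq> d - i \<longrightarrow> gdist V E u (rev D ! (d - i)) < gdist V E u (rev D ! j)"
    show "\<forall>j<length D. j \<noteq> i \<longrightarrow> gdist V E u (D ! i) < gdist V E u (D ! j)"
    proof (intro allI impI)
      fix j assume j: "j < length D" "j \<noteq> i"
      have "gdist V E u (rev D ! (d - i)) < gdist V E u (rev D ! (d - j))"
        using H[rule_format, of "d - j"] j i l by auto
      then show "gdist V E u (D ! i) < gdist V E u (D ! j)" using ri r[of "d - j"] j l by auto
    qed
  next
    assume H: "\<forall>j<length D. j \<noteq> i \<longrightarrow> gdist V E u (D ! i) < gdist V E u (D ! j)"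
    show "\<forall>j<length (rev D). j \<noteq> d - i \<longrightarrow> gdist V E u (rev D ! (d - i)) < gdist V E u (rev D ! j)"
    proof (intro allI impI)
      fix j assume j: "j < length (rev D)" "j \<noteq> d - i"
      have "gdist V E u (D ! i) < gdist V E u (D ! (d - j))"
        using H[rule_format, of "d - j"] j i l by auto
      then show "gdist V E u (rev D ! (d - i)) < gdist V E u (rev D ! j)" using ri r[of j] j l by auto
    qed
  qed
  then show ?thesis unfolding protrudes_def using l i by auto
qed

lemma limbs_rev: assumes l: "length D = Suc d" and i: "i \<le> d"
  shows "limb_type_A V E (rev D) (d - i) \<longleftrightarrow> limb_type_A V E D i"
    "limb_type_B V E (rev D) (d - i) \<longleftrightarrow> limb_type_B V E D i"
    "limb_type_C V E (rev D) (d - i) \<longleftrightarrow> limb_type_C V E D i"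
proof -
  have p: "protruding V E (rev D) (d - i) = protruding V E D i"
    unfolding protruding_def using protrudes_rev[OF l i] by auto
  have ri: "rev D ! (d - i) = D ! i" using l i by (simp add: rev_nth)
  show "limb_type_A V E (rev D) (d - i) \<longleftrightarrow> limb_type_A V E D i"
    "limb_type_B V E (rev D) (d - i) \<longleftrightarrow> limb_type_B V E D i"
    "limb_type_C V E (rev D) (d - i) \<longleftrightarrow> limb_type_C V E D i"
    unfolding limb_type_A_def limb_type_B_def limb_type_C_def p ri by auto
qed

lemma L0: assumes dp: "diametral_path V E D" and x: "x \<in> V" "x \<notin> set D" and e: "E (D ! 0) x"
  shows False
proof -
  have w: "walk V E D" and dD: "distinct D" and l: "length D = Suc (diam V E)"
    using dp by (auto simp: diametral_path_def)
  have "D \<noteq> []" using w by (auto simp: walk_def)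
  then have "hd D = D ! 0" by (simp add: hd_conv_nth)
  then have "walk V E (x # D)" using w x e Esym unfolding walk_succ by (cases D) auto
  moreover have "distinct (x # D)" using dD x by simp
  ultimately have "gdist V E x (last D) = length D" using gdist_path \<open>D \<noteq> []\<close> by fastforce
  moreover have "gdist V E x (last D) \<le> diam V E"
  proof -
    have "last D \<in> V" using w \<open>D \<noteq> []\<close> last_in_set[of D] by (auto simp: walk_def)
    then show ?thesis using gdist_le_diam x by blast
  qed
  ultimately show False using l by simp
qed

lemma drop1_path: assumes dp: "diametral_path V E D" and d1: "1 \<le> diam V E"
  and x: "x \<in> V" "x \<notin> set D" and e: "E (D ! 1) x"
  shows "walk V E (x # drop 1 D)" "distinct (x # drop 1 D)" "hd (drop 1 D) = D ! 1"
    "last (x # drop 1 D) = last D" "length (x # drop 1 D) = Suc (diam V E)"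
proof -
  have w: "walk V E D" and dD: "distinct D" and l: "length D = Suc (diam V E)"
    using dp by (auto simp: diametral_path_def)
  obtain a b D' where D: "D = a # b # D'" using l d1 by (cases D; cases "tl D") auto
  show "walk V E (x # drop 1 D)" using w x e Esym unfolding walk_succ D by auto
  show "distinct (x # drop 1 D)" using dD x D by auto
  show "hd (drop 1 D) = D ! 1" "last (x # drop 1 D) = last D" "length (x # drop 1 D) = Suc (diam V E)"
    using D l by auto
qed

lemma L1A: assumes dp: "diametral_path V E D" and d1: "1 \<le> diam V E"
  and x: "x \<in> V" "x \<notin> set D" and y: "y \<in> V" "y \<notin> set D" "x \<noteq> y"
  and e: "E (D ! 1) x" "E x y"
  shows False
proof -
  note P = drop1_path[OF dp d1 x e(1)]
  have "walk V E (y # x # drop 1 D)" using P(1) y e(2) Esym unfolding walk_succ by auto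
  moreover have "distinct (y # x # drop 1 D)" using P(2) y by (auto dest: in_set_dropD)
  ultimately have "gdist V E y (last D) = Suc (diam V E)" using gdist_path P(4,5) by fastforce
  moreover have "last D \<in> V" using dp by (auto simp: diametral_path_def walk_def)
  ultimately show False using gdist_le_diam[OF y(1)] by fastforce
qed

lemma L1B: assumes dp: "diametral_path V E D" and d2: "2 \<le> diam V E" and dm: "diametrical V E"
  and x: "x \<in> V" "x \<notin> set D" and y: "y \<in> V" "y \<notin> set D" "x \<noteq> y"
  and e: "E (D ! 1) x" "E (D ! 1) y"
  shows False
proof -
  have w: "walk V E D" and l: "length D = Suc (diam V E)" and g: "gdist V E (hd D) (last D) = diam V E"
    using dp by (auto simp: diametral_path_def)
  have hl: "hd D \<in> V" "last D \<in> V" "hd D \<in> set D" using w by (auto simp: walk_def)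
  have d1: "1 \<le> diam V E" using d2 by simp
  have gx: "gdist V E x (last D) = diam V E"
    using gdist_path[OF drop1_path(1,2)[OF dp d1 x e(1)]] drop1_path(4,5)[OF dp d1 x e(1)] by simp
  have gy: "gdist V E y (last D) = diam V E"
    using gdist_path[OF drop1_path(1,2)[OF dp d1 y(1,2) e(2)]] drop1_path(4,5)[OF dp d1 y(1,2) e(2)] by simp
  let ?S = "{u\<in>V. gdist V E (last D) u = diam V E}"
  have sub: "{hd D, x, y} \<subseteq> ?S" using gx gy g hl x y gdist_sym by auto
  have "hd D \<noteq> x" "hd D \<noteq> y" using x y hl by auto
  then have "card {hd D, x, y} = 3" using y(3) by simp
  then have "3 \<le> card ?S" using card_mono[OF _ sub] finV by (metis (no_types, lifting) finite_subset mem_Collect_eq subsetI)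
  then have "diam V E < upper_broadcast_number V E" using BL[OF hl(2) d2] by blast
  then show False using dm by (simp add: diametrical_def)
qed

end
context tr begin

lemma prot: "x \<in> protruding V E D i \<Longrightarrow> x \<in> V \<and> x \<notin> set D"
  by (simp add: protruding_def protrudes_def)

lemma low0: assumes dp: "diametral_path V E D"
  shows "limb_type_A V E D 0 \<or> limb_type_B V E D 0 \<or> limb_type_C V E D 0 \<Longrightarrow> False"
  unfolding limb_type_A_def limb_type_B_def limb_type_C_def
  using L0[OF dp] prot by blast

lemma low1: assumes dp: "diametral_path V E D" and dm: "diametrical V E" and d2: "2 \<le> diam V E"
  shows "limb_type_A V E D 1 \<or> limb_type_B V E D 1 \<Longrightarrow> False"
proof -
  assume "limb_type_A V E D 1 \<or> limb_type_B V E D 1"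
  then show False
  proof
    assume "limb_type_A V E D 1"
    then obtain x y where "x \<noteq> y" "protruding V E D 1 = {x, y}" "E (D ! 1) x" "E x y"
      unfolding limb_type_A_def by blast
    then show False using L1A[OF dp, of x y] prot[of x D 1] prot[of y D 1] d2 by auto
  next
    assume "limb_type_B V E D 1"
    then obtain x y where "x \<noteq> y" "protruding V E D 1 = {x, y}" "E (D ! 1) x" "E (D ! 1) y"
      unfolding limb_type_B_def by blast
    then show False using L1B[OF dp d2 dm, of x y] prot[of x D 1] prot[of y D 1] by auto
  qed
qed

end

theorem mainTheorem10:
  fixes V :: "'a set" and E :: "'a \<Rightarrow> 'a \<Rightarrow> bool" and D :: "'a list" and i d :: nat
  assumes "is_tree V E"
    and "diametrical V E"
    and "diametral_path V E D"
    and "d = length D - 1"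
    and "i \<le> d"
  shows "((limb_type_A V E D i \<or> limb_type_B V E D i) \<longrightarrow> 2 \<le> i \<and> 2 \<le> d - i)
       \<and> (limb_type_C V E D i \<longrightarrow> 1 \<le> i \<and> 1 \<le> d - i)"
proof -
  interpret tr V E by (rule tr.intro) (rule assms(1))
  have l: "length D = Suc d" and dd: "diam V E = d" using assms(3,4)
    by (auto simp: diametral_path_def)
  have dpr: "diametral_path V E (rev D)" using dpath_rev assms(3) by blast
  note R = limbs_rev[OF l assms(5)]
  note lo0 = low0[OF assms(3)] and lo0r = low0[OF dpr]
  note lo1 = low1[OF assms(3) assms(2)] and lo1r = low1[OF dpr assms(2)]
  have ii: "d - (d - i) = i" using assms(5) by simp
  show ?thesis
  proof (intro conjI impI)
    assume H: "limb_type_A V E D i \<or> limb_type_B V E D i"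
    have Hr: "limb_type_A V E (rev D) (d - i) \<or> limb_type_B V E (rev D) (d - i)" using H R by blast
    show "2 \<le> i"
    proof (rule ccontr)
      assume "\<not> 2 \<le> i"
      then consider "i = 0" | "i = 1" by linarith
      then show False
      proof cases
        case 1 then show False using lo0 H by blast
      next
        case 2
        show False
        proof (cases "2 \<le> d")
          case True then show False using lo1 H 2 dd by auto
        next
          case False then have "d - i = 0" using 2 assms(5) by auto
          then show False using lo0r Hr by auto
        qed
      qed
    qed
    show "2 \<le> d - i"
    proof (rule ccontr)
      assume "\<not> 2 \<le> d - i"
      then consider "d - i = 0" | "d - i = 1" by linarith
      then show False
      proof cases
        case 1 then show False using lo0r Hr by auto
      next
        case 2
        show False
        proof (cases "2 \<le> d")
          case True then show False using lo1r Hr 2 dd by auto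
        next
          case False then have "i = 0" using 2 assms(5) by auto
          then show False using lo0 H by blast
        qed
      qed
    qed
  next
    assume H: "limb_type_C V E D i"
    have Hr: "limb_type_C V E (rev D) (d - i)" using H R by blast
    show "1 \<le> i" using lo0 H by (cases i) auto
    show "1 \<le> d - i" using lo0r Hr by (cases "d - i") auto
  qed
qed

end
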